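(* Let $F$ be a pseudo-Boolean formula and let $(\mathcal{C},\mathcal{D},\mathcal{O},\mathcal{S},\vec z,\vec a)$ be a configuration satisfying the standing invariants below that is weakly $F$-valid. Suppose that a PB constraint $C$ and a substitution $\omega$ satisfy: $C$ contains no variable of $\vec a$; no variable is mapped by $\omega$ to a literal over a variable of $\vec a$; and there is a cutting planes derivation $\mathcal{C}\cup\mathcal{D}\cup\{\neg C\}\cup\mathcal{S}(\vec z{\upharpoonright}_\omega,\vec z,\vec a)\vdash(\mathcal{C}\cup\mathcal{D}\cup\{C\}){\upharpoonright}_\omega\cup\mathcal{O}(\vec z{\upharpoonright}_\omega,\vec z,\vec a)$ (i.e., the transition to $(\mathcal{C},\mathcal{D}\cup\{C\},\mathcal{O},\mathcal{S},\vec z,\vec a)$ is a valid application of the redundance rule). Then $(\mathcal{C},\mathcal{D}\cup\{C\},\mathcal{O},\mathcal{S},\vec z,\vec a)$ is also weakly $F$-valid.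
   Context: A literal is $x$ or $\bar x=1-x$; a PB constraint is $\sum_i a_i\ell_i\ge A$ with negation $\neg C\doteq\sum_i a_i\bar\ell_i\ge\sum_i a_i-A+1$; formulas are sets of PB constraints; $\vdash$ is cutting planes derivability (sound). Substitutions $\omega$ map variables to $0,1$ or literals, with $\omega(\bar x)=\overline{\omega(x)}$, $\mathrm{supp}(\omega)=\{x:\omega(x)\ne x\}$, $F{\upharpoonright}_\omega$ the result of applying $\omega$ to each literal of each constraint, $\vec z{\upharpoonright}_\omega=\omega(z_1),\dots,\omega(z_n)$, $(\alpha\circ\omega)(x)=\alpha(\omega(x))$. A formula $\mathcal{S}(\vec x,\vec a)=\{C_1,\dots,C_m\}$ is a specification over $\vec a$ if there are substitutions $\omega_i$ with $\mathrm{supp}(\omega_i)\subseteq\vec a$ such that $\{C_1,\dots,C_{i-1},\neg C_i\}\vdash\{C_1{\upharpoonright}_{\omega_i},\dots,C_i{\upharpoonright}_{\omega_i}\}$ for each $i$. Given formulas $\mathcal{O}(\vec u,\vec v,\vec a)$, $\mathcal{S}(\vec u,\vec v,\vec a)$ ($\vec u,\vec v$ of length $n$) and a list $\vec z$ of $n$ variables, $\alpha\preceq\beta$ holds iff there is an assignment $\rho$ to $\vec a$ with $\mathcal{S}(\vec z{\upharpoonright}_\alpha,\vec z{\upharpoonright}_\beta,\vec a{\upharpoonright}_\rho)\wedge\mathcal{O}(\vec z{\upharpoonright}_\alpha,\vec z{\upharpoonright}_\beta,\vec a{\upharpoonright}_\rho)$ true. A configuration is a tuple $(\mathcal{C},\mathcal{D},\mathcal{O},\mathcal{S},\vec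 z,\vec a)$ of formulas $\mathcal{C}$ (core), $\mathcal{D}$ (derived), $\mathcal{O},\mathcal{S}$ and disjoint variable lists $\vec z,\vec a$, satisfying the standing invariants: (1) there are cutting planes derivations $\mathcal{S}(\vec x,\vec x,\vec a)\vdash\mathcal{O}(\vec x,\vec x,\vec a)$ and $\mathcal{S}(\vec x,\vec y,\vec a)\cup\mathcal{O}(\vec x,\vec y,\vec a)\cup\mathcal{S}(\vec y,\vec z',\vec b)\cup\mathcal{O}(\vec y,\vec z',\vec b)\cup\mathcal{S}(\vec x,\vec z',\vec c)\vdash\mathcal{O}(\vec x,\vec z',\vec c)$ for fresh variable lists; (2) $\mathcal{S}$ is a specification over $\vec a$; (3) the variables of $\vec a$ occur only in $\mathcal{O}$ and $\mathcal{S}$ and are disjoint from $\vec z$. Assignments satisfying $\mathcal{C}\cup\mathcal{D}$ are total assignments to the non-auxiliary variables (they do not assign $\vec a$). The configuration is weakly $F$-valid if (1) if $F$ is satisfiable then $\mathcal{C}$ is satisfiable, and (2) for every assignment $\alpha$ satisfying $\mathcal{C}$ there is an assignment $\alpha'$ satisfying $\mathcal{C}\cup\mathcal{D}$ with $\alpha'\preceq\alpha$. *)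

theory Defs
  imports Main
begin

datatype 'v lit = Pos 'v | Neg 'v

fun lit_var :: "'v lit \<Rightarrow> 'v" where
  "lit_var (Pos x) = x" | "lit_var (Neg x) = x"

fun neg_lit :: "'v lit \<Rightarrow> 'v lit" where
  "neg_lit (Pos x) = Neg x" | "neg_lit (Neg x) = Pos x"

text \<open>A PB constraint  sum_i a_i l_i >= A  is a list of terms (a_i, l_i) together with A.\<close>
type_synonym 'v pbc = "(int \<times> 'v lit) list \<times> int"
type_synonym 'v pbf = "'v pbc set"

fun lit_val :: "('v \<Rightarrow> bool) \<Rightarrow> 'v lit \<Rightarrow> int" where
  "lit_val \<alpha> (Pos x) = (if \<alpha> x then 1 else 0)"
| "lit_val \<alpha> (Neg x) = (if \<alpha> x then 0 else 1)"

definition lhs :: "('v \<Rightarrow> bool) \<Rightarrow> (int \<times> 'v lit) list \<Rightarrow> int" where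
  "lhs \<alpha> t = (\<Sum>(a, l)\<leftarrow>t. a * lit_val \<alpha> l)"

definition sat_pbc :: "('v \<Rightarrow> bool) \<Rightarrow> 'v pbc \<Rightarrow> bool" where
  "sat_pbc \<alpha> C \<longleftrightarrow> lhs \<alpha> (fst C) \<ge> snd C"

definition sat_pbf :: "('v \<Rightarrow> bool) \<Rightarrow> 'v pbf \<Rightarrow> bool" where
  "sat_pbf \<alpha> F \<longleftrightarrow> (\<forall>C\<in>F. sat_pbc \<alpha> C)"

definition satisfiable :: "'v pbf \<Rightarrow> bool" where
  "satisfiable F \<longleftrightarrow> (\<exists>\<alpha>. sat_pbf \<alpha> F)"

definition neg_pbc :: "'v pbc \<Rightarrow> 'v pbc" where
  "neg_pbc C = (map (\<lambda>(a, l). (a, neg_lit l)) (fst C), sum_list (map fst (fst C)) - snd C + 1)"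

definition vars_pbc :: "'v pbc \<Rightarrow> 'v set" where
  "vars_pbc C = {lit_var l | a l. (a, l) \<in> set (fst C)}"

definition vars_pbf :: "'v pbf \<Rightarrow> 'v set" where
  "vars_pbf F = (\<Union>C\<in>F. vars_pbc C)"

text \<open>Ceiling division for positive divisor.\<close>
definition cdiv :: "int \<Rightarrow> int \<Rightarrow> int" where
  "cdiv a c = - ((- a) div c)"

inductive cp :: "'v pbf \<Rightarrow> 'v pbc \<Rightarrow> bool" for F :: "'v pbf" where
  cp_axiom: "C \<in> F \<Longrightarrow> cp F C"
| cp_lit: "cp F ([(1, l)], 0)"
| cp_add: "cp F (t1, A1) \<Longrightarrow> cp F (t2, A2) \<Longrightarrow> cp F (t1 @ t2, A1 + A2)"
| cp_mult: "cp F (t, A) \<Longrightarrow> c > 0 \<Longrightarrow> cp F (map (\<lambda>(a, l). (c * a, l)) t, c * A)"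
| cp_div: "cp F (t, A) \<Longrightarrow> c > 0 \<Longrightarrow> (\<forall>(a, l)\<in>set t. a \<ge> 0) \<Longrightarrow>
     cp F (map (\<lambda>(a, l). (cdiv a c, l)) t, cdiv A c)"
| cp_sat: "cp F (t, A) \<Longrightarrow> A \<ge> 0 \<Longrightarrow> (\<forall>(a, l)\<in>set t. a \<ge> 0) \<Longrightarrow>
     cp F (map (\<lambda>(a, l). (min a A, l)) t, A)"
| cp_rewrite: "cp F (t, A) \<Longrightarrow> (\<forall>\<alpha>. lhs \<alpha> t - A = lhs \<alpha> t' - A') \<Longrightarrow> cp F (t', A')"

definition derives :: "'v pbf \<Rightarrow> 'v pbf \<Rightarrow> bool" (infix "\<turnstile>\<^sub>c\<^sub>p" 50) where
  "F \<turnstile>\<^sub>c\<^sub>p G \<longleftrightarrow> (\<forall>C\<in>G. cp F C)"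

datatype 'v sval = Val bool | LitV "'v lit"

fun neg_sval :: "'v sval \<Rightarrow> 'v sval" where
  "neg_sval (Val b) = Val (\<not> b)" | "neg_sval (LitV l) = LitV (neg_lit l)"

fun sub_lit :: "('w \<Rightarrow> 'v sval) \<Rightarrow> 'w lit \<Rightarrow> 'v sval" where
  "sub_lit \<omega> (Pos x) = \<omega> x" | "sub_lit \<omega> (Neg x) = neg_sval (\<omega> x)"

text \<open>Applying a substitution to a constraint: terms mapped to literals stay, terms mapped to 1
  are moved to the degree, terms mapped to 0 vanish.\<close>
definition subst_pbc :: "('w \<Rightarrow> 'v sval) \<Rightarrow> 'w pbc \<Rightarrow> 'v pbc" where
  "subst_pbc \<omega> C =
    (concat (map (\<lambda>(a, l). case sub_lit \<omega> l of LitV l' \<Rightarrow> [(a, l')] | Val _ \<Rightarrow> []) (fst C)),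
     snd C - sum_list (map (\<lambda>(a, l). if sub_lit \<omega> l = Val True then a else 0) (fst C)))"

definition subst_pbf :: "('w \<Rightarrow> 'v sval) \<Rightarrow> 'w pbf \<Rightarrow> 'v pbf" where
  "subst_pbf \<omega> F = subst_pbc \<omega> ` F"

definition supp :: "('v \<Rightarrow> 'v sval) \<Rightarrow> 'v set" where
  "supp \<omega> = {x. \<omega> x \<noteq> LitV (Pos x)}"

definition list_subst :: "'v list \<Rightarrow> ('v \<Rightarrow> 'w sval) \<Rightarrow> 'w sval list" where
  "list_subst zs \<omega> = map \<omega> zs"

definition list_assign :: "'v list \<Rightarrow> ('v \<Rightarrow> bool) \<Rightarrow> 'w sval list" where
  "list_assign zs \<alpha> = map (\<lambda>x. Val (\<alpha> x)) zs"

definition list_vars :: "'v list \<Rightarrow> 'v sval list" where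
  "list_vars zs = map (\<lambda>x. LitV (Pos x)) zs"

text \<open>Formal parameters: u_i = FU i, v_i = FV i, a_j = FA j.\<close>
datatype fvar = FU nat | FV nat | FA nat

fun inst :: "'v sval list \<Rightarrow> 'v sval list \<Rightarrow> 'v sval list \<Rightarrow> fvar \<Rightarrow> 'v sval" where
  "inst xs ys cs (FU i) = xs ! i"
| "inst xs ys cs (FV i) = ys ! i"
| "inst xs ys cs (FA j) = cs ! j"

definition app :: "fvar pbf \<Rightarrow> 'v sval list \<Rightarrow> 'v sval list \<Rightarrow> 'v sval list \<Rightarrow> 'v pbf" where
  "app P xs ys cs = subst_pbf (inst xs ys cs) P"

definition params_ok :: "nat \<Rightarrow> nat \<Rightarrow> fvar pbf \<Rightarrow> bool" where
  "params_ok n m P \<longleftrightarrow> vars_pbf P \<subseteq> {FU i | i. i < n} \<union> {FV i | i. i < n} \<union> {FA j | j. j < m}"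

text \<open>Fresh variables used to state invariant (1).\<close>
datatype ivar = IX nat | IY nat | IZ nat | IA nat | IB nat | IC nat

definition fresh :: "(nat \<Rightarrow> ivar) \<Rightarrow> nat \<Rightarrow> ivar sval list" where
  "fresh f k = map (\<lambda>i. LitV (Pos (f i))) [0..<k]"

definition is_specification :: "nat \<Rightarrow> fvar pbf \<Rightarrow> bool" where
  "is_specification m S \<longleftrightarrow> finite S \<and> (\<exists>cs. distinct cs \<and> set cs = S \<and>
     (\<forall>i < length cs. \<exists>\<omega>. supp \<omega> \<subseteq> {FA j | j. j < m} \<and>
        (set (take i cs) \<union> {neg_pbc (cs ! i)}) \<turnstile>\<^sub>c\<^sub>p subst_pbf \<omega> (set (take (Suc i) cs))))"

definition configuration ::
  "'v pbf \<Rightarrow> 'v pbf \<Rightarrow> fvar pbf \<Rightarrow> fvar pbf \<Rightarrow> 'v list \<Rightarrow> 'v list \<Rightarrow> bool" where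
  "configuration C D Ob Sp z a \<longleftrightarrow>
    (let n = length z; m = length a;
         x = fresh IX n; y = fresh IY n; z' = fresh IZ n;
         a0 = fresh IA m; b = fresh IB m; c = fresh IC m in
     distinct z \<and> distinct a \<and> set z \<inter> set a = {} \<and>
     params_ok n m Ob \<and> params_ok n m Sp \<and>
     \<comment> \<open>invariant (1)\<close>
     app Sp x x a0 \<turnstile>\<^sub>c\<^sub>p app Ob x x a0 \<and>
     app Sp x y a0 \<union> app Ob x y a0 \<union> app Sp y z' b \<union> app Ob y z' b \<union> app Sp x z' c
        \<turnstile>\<^sub>c\<^sub>p app Ob x z' c \<and>
     \<comment> \<open>invariant (2)\<close>
     is_specification m Sp \<and>
     \<comment> \<open>invariant (3)\<close>
     vars_pbf C \<inter> set a = {} \<and> vars_pbf D \<inter> set a = {})"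

text \<open>alpha \<preceq> beta: some assignment rho to a makes S(z|alpha, z|beta, a|rho) and
  Ob(z|alpha, z|beta, a|rho) true (these are variable-free).\<close>
definition pre ::
  "fvar pbf \<Rightarrow> fvar pbf \<Rightarrow> 'v list \<Rightarrow> 'v list \<Rightarrow> ('v \<Rightarrow> bool) \<Rightarrow> ('v \<Rightarrow> bool) \<Rightarrow> bool" where
  "pre Ob Sp z a \<alpha> \<beta> \<longleftrightarrow> (\<exists>\<rho>::'v \<Rightarrow> bool. \<forall>\<gamma>::'v \<Rightarrow> bool.
     sat_pbf \<gamma> (app Sp (list_assign z \<alpha>) (list_assign z \<beta>) (list_assign a \<rho>) \<union>
                app Ob (list_assign z \<alpha>) (list_assign z \<beta>) (list_assign a \<rho>)))"

definition weakly_valid ::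
  "'v pbf \<Rightarrow> 'v pbf \<Rightarrow> 'v pbf \<Rightarrow> fvar pbf \<Rightarrow> fvar pbf \<Rightarrow> 'v list \<Rightarrow> 'v list \<Rightarrow> bool" where
  "weakly_valid F C D Ob Sp z a \<longleftrightarrow>
     (satisfiable F \<longrightarrow> satisfiable C) \<and>
     (\<forall>\<alpha>. sat_pbf \<alpha> C \<longrightarrow> (\<exists>\<alpha>'. sat_pbf \<alpha>' (C \<union> D) \<and> pre Ob Sp z a \<alpha>' \<alpha>))"

end

theory Submission
  imports Defs
begin

fun sv :: "('v \<Rightarrow> bool) \<Rightarrow> 'v sval \<Rightarrow> bool" where
  "sv g (Val b) = b" | "sv g (LitV (Pos x)) = g x" | "sv g (LitV (Neg x)) = (\<not> g x)"

lemma lhs_Nil[simp]: "lhs g [] = 0" by (simp add: lhs_def)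
lemma lhs_Cons[simp]: "lhs g ((a,l)#t) = a * lit_val g l + lhs g t" by (simp add: lhs_def)
lemma lhs_append[simp]: "lhs g (t1@t2) = lhs g t1 + lhs g t2" by (simp add: lhs_def)
lemma lit_val_01: "lit_val g l = 0 \<or> lit_val g l = 1" by (cases l) auto
lemma lit_val_neg: "lit_val g (neg_lit l) = 1 - lit_val g l" by (cases l) auto

lemma lhs_mult: "lhs g (map (\<lambda>(a,l). (c*a,l)) t) = c * lhs g t"
  by (induction t) (auto simp: algebra_simps)

lemma cdiv_add: "(c::int) > 0 \<Longrightarrow> cdiv (x+y) c \<le> cdiv x c + cdiv y c"
proof -
  assume c: "c > 0"
  have "(-x + -y) div c = (-x) div c + (-y) div c + (((-x) mod c + (-y) mod c) div c)"
    by (rule div_add1_eq)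
  moreover have "((-x) mod c + (-y) mod c) div c \<ge> 0"
    using c by (simp add: pos_imp_zdiv_nonneg_iff add_nonneg_nonneg)
  ultimately show ?thesis unfolding cdiv_def by simp
qed

lemma cdiv_mono: "(c::int) > 0 \<Longrightarrow> x \<le> y \<Longrightarrow> cdiv x c \<le> cdiv y c"
  unfolding cdiv_def by (simp add: zdiv_mono1)

lemma cdiv_0[simp]: "cdiv 0 c = 0" by (simp add: cdiv_def)

lemma lhs_div: "c > 0 \<Longrightarrow> cdiv (lhs g t) c \<le> lhs g (map (\<lambda>(a,l). (cdiv a c, l)) t)"
proof (induction t)
  case Nil then show ?case by simp
next
  case (Cons p t)
  obtain a l where p: "p = (a,l)" by force
  have "cdiv (a * lit_val g l + lhs g t) c \<le> cdiv (a * lit_val g l) c + cdiv (lhs g t) c"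
    using Cons.prems cdiv_add by blast
  moreover have "cdiv (a * lit_val g l) c = cdiv a c * lit_val g l"
    using lit_val_01[of g l] by auto
  ultimately show ?case using Cons p by simp
qed

lemma lhs_sat: "(\<forall>(a,l)\<in>set t. a \<ge> 0) \<Longrightarrow> (A::int) \<ge> 0 \<Longrightarrow>
   min (lhs g t) A \<le> lhs g (map (\<lambda>(a,l). (min a A, l)) t) \<and> 0 \<le> lhs g (map (\<lambda>(a,l). (min a A, l)) t)"
proof (induction t)
  case Nil then show ?case by simp
next
  case (Cons p t)
  obtain a l where p: "p = (a,l)" by force
  have a: "a \<ge> 0" using Cons.prems p by auto
  have IH: "min (lhs g t) A \<le> lhs g (map (\<lambda>(a,l). (min a A, l)) t) \<and> 0 \<le> lhs g (map (\<lambda>(a,l). (min a A, l)) t)"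
    using Cons by auto
  define L where "L = lhs g t"
  define L' where "L' = lhs g (map (\<lambda>(a,l). (min a A, l)) t)"
  have A: "A \<ge> 0" using Cons.prems(2) .
  have h1: "min L A \<le> L'" "0 \<le> L'" using IH by (simp_all add: L_def L'_def)
  have h2: "min (a * v + L) A \<le> min a A * v + L' \<and> 0 \<le> min a A * v + L'" if "v = 0 \<or> v = 1" for v :: int
  proof (cases "v = 0")
    case True then show ?thesis using h1 by simp
  next
    case False then have "v = 1" using that by simp
    then show ?thesis using h1 a A unfolding min_def by (simp split: if_split_asm) linarith?
  qed
  show ?case using h2[OF lit_val_01[of g l]] p by (simp add: L_def L'_def)
qed

lemma cp_sound: "cp F C \<Longrightarrow> sat_pbf g F \<Longrightarrow> sat_pbc g C"
proof (induction rule: cp.induct)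
  case (cp_axiom C) then show ?case by (simp add: sat_pbf_def)
next
  case (cp_lit l) then show ?case using lit_val_01[of g l] by (auto simp: sat_pbc_def)
next
  case (cp_add t1 A1 t2 A2) then show ?case by (simp add: sat_pbc_def)
next
  case (cp_mult t A c) then show ?case by (simp add: sat_pbc_def lhs_mult)
next
  case (cp_div t A c)
  then have "A \<le> lhs g t" by (simp add: sat_pbc_def)
  then have "cdiv A c \<le> cdiv (lhs g t) c" using cp_div cdiv_mono by blast
  then show ?case using lhs_div[of c g t] cp_div by (simp add: sat_pbc_def)
next
  case (cp_sat t A)
  then have "A \<le> lhs g t" by (simp add: sat_pbc_def)
  then show ?case using lhs_sat[of t A g] cp_sat by (simp add: sat_pbc_def)
next
  case (cp_rewrite t A t' A')
  then show ?case by (simp add: sat_pbc_def) (metis diff_ge_0_iff_ge)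
qed

lemma derives_sound: "F \<turnstile>\<^sub>c\<^sub>p G \<Longrightarrow> sat_pbf g F \<Longrightarrow> sat_pbf g G"
  using cp_sound unfolding derives_def sat_pbf_def by blast

lemma lhs_negmap: "lhs g (map (\<lambda>(a, l). (a, neg_lit l)) t) = sum_list (map fst t) - lhs g t"
  by (induction t) (auto simp: lit_val_neg algebra_simps)

lemma neg_sat: "\<not> sat_pbc g C \<Longrightarrow> sat_pbc g (neg_pbc C)"
  by (simp add: sat_pbc_def neg_pbc_def lhs_negmap)

lemma lit_val_subst:
  "lit_val (sv g \<circ> \<sigma>) l = (case sub_lit \<sigma> l of Val b \<Rightarrow> (if b then 1 else 0) | LitV l' \<Rightarrow> lit_val g l')"
proof (cases l)
  case (Pos x) then show ?thesis
    by (cases "\<sigma> x" rule: sval.exhaust; auto; rename_tac l'; case_tac l'; auto)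
next
  case (Neg x) then show ?thesis
    by (cases "\<sigma> x" rule: sval.exhaust; auto; rename_tac l'; case_tac l'; auto)
qed

lemma lhs_subst:
  "lhs g (concat (map (\<lambda>(a, l). case sub_lit \<sigma> l of LitV l' \<Rightarrow> [(a, l')] | Val _ \<Rightarrow> []) t))
   + sum_list (map (\<lambda>(a, l). if sub_lit \<sigma> l = Val True then a else 0) t) = lhs (sv g \<circ> \<sigma>) t"
proof (induction t)
  case Nil then show ?case by simp
next
  case (Cons p t)
  obtain a l where p: "p = (a,l)" by force
  have lv: "lit_val (\<lambda>x. sv g (\<sigma> x)) l = (case sub_lit \<sigma> l of Val b \<Rightarrow> (if b then 1 else 0) | LitV l' \<Rightarrow> lit_val g l')"
    using lit_val_subst[of g \<sigma> l] by (simp add: comp_def)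
  show ?case using Cons p lv
    by (cases "sub_lit \<sigma> l") (auto simp: comp_def)
qed

lemma sat_subst: "sat_pbc g (subst_pbc \<sigma> C) \<longleftrightarrow> sat_pbc (sv g \<circ> \<sigma>) C"
  using lhs_subst[of g \<sigma> "fst C"] unfolding sat_pbc_def subst_pbc_def by auto

lemma sat_subst_pbf: "sat_pbf g (subst_pbf \<sigma> F) \<longleftrightarrow> sat_pbf (sv g \<circ> \<sigma>) F"
  by (simp add: sat_pbf_def subst_pbf_def sat_subst)

lemma sat_pbf_Un[simp]: "sat_pbf g (A \<union> B) = (sat_pbf g A \<and> sat_pbf g B)"
  by (auto simp: sat_pbf_def)

lemma app_sat: "sat_pbf g (app P xs ys cs) \<longleftrightarrow> sat_pbf (sv g \<circ> inst xs ys cs) P"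
  by (simp add: app_def sat_subst_pbf)

lemma lhs_agree: "(\<forall>(a,l)\<in>set t. f (lit_var l) = g (lit_var l)) \<Longrightarrow> lhs f t = lhs g t"
proof (induction t)
  case Nil then show ?case by simp
next
  case (Cons p t)
  obtain a l where p: "p = (a,l)" by force
  have fl: "f (lit_var l) = g (lit_var l)" using Cons.prems p by simp
  have "lit_val f l = lit_val g l" using fl by (cases l) simp_all
  moreover have "lhs f t = lhs g t" using Cons.prems by (intro Cons.IH) simp
  ultimately show ?case using p by simp
qed

lemma sat_pbc_agree:
  assumes "\<forall>v\<in>vars_pbc C. f v = g v" shows "sat_pbc f C = sat_pbc g C"
proof -
  have "\<forall>(a,l)\<in>set (fst C). f (lit_var l) = g (lit_var l)"
    using assms unfolding vars_pbc_def by blast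
  then have "lhs f (fst C) = lhs g (fst C)" by (rule lhs_agree)
  then show ?thesis unfolding sat_pbc_def by simp
qed

lemma sat_pbf_agree:
  assumes "\<forall>v\<in>vars_pbf P. f v = g v" shows "sat_pbf f P = sat_pbf g P"
proof -
  have "sat_pbc f C = sat_pbc g C" if "C \<in> P" for C
  proof (rule sat_pbc_agree, rule ballI)
    fix v assume "v \<in> vars_pbc C"
    then have "v \<in> vars_pbf P" unfolding vars_pbf_def using that by (rule UN_I[rotated])
    then show "f v = g v" using assms by (rule bspec[rotated])
  qed
  then show ?thesis unfolding sat_pbf_def by (meson)
qed

lemma params_agree:
  assumes "params_ok n m P" "\<forall>i<n. f (FU i) = g (FU i)" "\<forall>i<n. f (FV i) = g (FV i)"
    "\<forall>j<m. f (FA j) = g (FA j)"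
  shows "sat_pbf f P = sat_pbf g P"
proof (rule sat_pbf_agree, rule ballI)
  fix v assume "v \<in> vars_pbf P"
  then have "v \<in> {FU i | i. i < n} \<union> {FV i | i. i < n} \<union> {FA j | j. j < m}"
    using assms(1) unfolding params_ok_def by blast
  then show "f v = g v"
  proof (elim UnE)
    assume "v \<in> {FU i | i. i < n}" then obtain i where "v = FU i" "i < n" by blast
    then show ?thesis using assms(2) by simp
  next
    assume "v \<in> {FV i | i. i < n}" then obtain i where "v = FV i" "i < n" by blast
    then show ?thesis using assms(3) by simp
  next
    assume "v \<in> {FA j | j. j < m}" then obtain j where "v = FA j" "j < m" by blast
    then show ?thesis using assms(4) by simp
  qed
qed

lemma params_agree':
  assumes "params_ok n m P" "sat_pbf g P" "\<forall>i<n. f (FU i) = g (FU i)" "\<forall>i<n. f (FV i) = g (FV i)"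
    "\<forall>j<m. f (FA j) = g (FA j)"
  shows "sat_pbf f P"
  using params_agree[OF assms(1) assms(3-5)] assms(2) by simp

lemma spec_ext:
  assumes "is_specification m Sp"
  shows "\<exists>\<nu>'. sat_pbf \<nu>' Sp \<and> (\<forall>v. v \<notin> {FA j | j. j < m} \<longrightarrow> \<nu>' v = \<nu> v)"
proof -
  obtain cs where cs: "distinct cs" "set cs = Sp" and
    st: "\<forall>i < length cs. \<exists>\<omega>. supp \<omega> \<subseteq> {FA j | j. j < m} \<and>
        (set (take i cs) \<union> {neg_pbc (cs ! i)}) \<turnstile>\<^sub>c\<^sub>p subst_pbf \<omega> (set (take (Suc i) cs))"
    using assms unfolding is_specification_def by blast
  have "i \<le> length cs \<Longrightarrow> \<exists>\<nu>'. sat_pbf \<nu>' (set (take i cs)) \<and> (\<forall>v. v \<notin> {FA j | j. j < m} \<longrightarrow> \<nu>' v = \<nu> v)" for i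
  proof (induction i)
    case 0 show ?case by (rule exI[of _ \<nu>]) (simp add: sat_pbf_def)
  next
    case (Suc i)
    then obtain \<nu>' where h1: "sat_pbf \<nu>' (set (take i cs))" and h2: "\<forall>v. v \<notin> {FA j | j. j < m} \<longrightarrow> \<nu>' v = \<nu> v"
      by auto
    have il: "i < length cs" using Suc.prems by simp
    have tk: "set (take (Suc i) cs) = insert (cs ! i) (set (take i cs))" using il
      by (simp add: take_Suc_conv_app_nth)
    show ?case
    proof (cases "sat_pbc \<nu>' (cs ! i)")
      case True
      then have "sat_pbf \<nu>' (set (take (Suc i) cs))" using h1 tk by (auto simp: sat_pbf_def)
      then show ?thesis using h2 by blast
    next
      case False
      obtain \<omega> where om: "supp \<omega> \<subseteq> {FA j | j. j < m}" and
        d: "(set (take i cs) \<union> {neg_pbc (cs ! i)}) \<turnstile>\<^sub>c\<^sub>p subst_pbf \<omega> (set (take (Suc i) cs))"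
        using st il by blast
      have "sat_pbf \<nu>' (set (take i cs) \<union> {neg_pbc (cs ! i)})" using h1 neg_sat[OF False]
        by (simp add: sat_pbf_def)
      then have "sat_pbf \<nu>' (subst_pbf \<omega> (set (take (Suc i) cs)))" using derives_sound d by blast
      then have s: "sat_pbf (sv \<nu>' \<circ> \<omega>) (set (take (Suc i) cs))" by (simp add: sat_subst_pbf)
      have "\<forall>v. v \<notin> {FA j | j. j < m} \<longrightarrow> (sv \<nu>' \<circ> \<omega>) v = \<nu> v"
      proof (intro allI impI)
        fix v assume v: "v \<notin> {FA j | j. j < m}"
        then have "\<omega> v = LitV (Pos v)" using om unfolding supp_def by blast
        then show "(sv \<nu>' \<circ> \<omega>) v = \<nu> v" using h2 v by simp
      qed
      then show ?thesis using s by blast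
    qed
  qed
  from this[of "length cs"] cs show ?thesis by simp
qed

fun asg :: "'v list \<Rightarrow> 'v list \<Rightarrow> ('v\<Rightarrow>bool) \<Rightarrow> ('v\<Rightarrow>bool) \<Rightarrow> ('v\<Rightarrow>bool) \<Rightarrow> fvar \<Rightarrow> bool" where
  "asg z a \<alpha> \<beta> \<rho> (FU i) = \<alpha> (z!i)"
| "asg z a \<alpha> \<beta> \<rho> (FV i) = \<beta> (z!i)"
| "asg z a \<alpha> \<beta> \<rho> (FA j) = \<rho> (a!j)"

lemma pre_iff:
  fixes z a :: "'v list"
  assumes "params_ok (length z) (length a) Ob" "params_ok (length z) (length a) Sp"
  shows "pre Ob Sp z a \<alpha> \<beta> \<longleftrightarrow> (\<exists>\<rho>. sat_pbf (asg z a \<alpha> \<beta> \<rho>) Sp \<and> sat_pbf (asg z a \<alpha> \<beta> \<rho>) Ob)"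
proof -
  have e: "sat_pbf (sv (g::'v\<Rightarrow>bool) \<circ> inst (list_assign z \<alpha>) (list_assign z \<beta>) (list_assign a \<rho>)) P
      = sat_pbf (asg z a \<alpha> \<beta> \<rho>) P" if "params_ok (length z) (length a) P" for g \<rho> P
    by (rule params_agree[OF that]) (auto simp: list_assign_def)
  have "sat_pbf (g::'v\<Rightarrow>bool) (app Sp (list_assign z \<alpha>) (list_assign z \<beta>) (list_assign a \<rho>) \<union>
     app Ob (list_assign z \<alpha>) (list_assign z \<beta>) (list_assign a \<rho>)) \<longleftrightarrow>
     sat_pbf (asg z a \<alpha> \<beta> \<rho>) Sp \<and> sat_pbf (asg z a \<alpha> \<beta> \<rho>) Ob" for g \<rho>
    using e[OF assms(1)] e[OF assms(2)] by (simp add: app_sat)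
  then show ?thesis unfolding pre_def by simp
qed

lemma some_idx:
  assumes "distinct a" "j < length a"
  shows "(SOME k. k < length a \<and> a!k = a!j) = j"
proof (rule some_equality)
  show "j < length a \<and> a!j = a!j" using assms by simp
next
  fix k assume "k < length a \<and> a!k = a!j"
  then show "k = j" using assms nth_eq_iff_index_eq by blast
qed

lemma fresh_nth[simp]: "i < k \<Longrightarrow> fresh f k ! i = LitV (Pos (f i))"
  by (simp add: fresh_def)

lemma pre_trans:
  assumes cf: "configuration C D Ob Sp z a" and p1: "pre Ob Sp z a \<beta> \<alpha>'" and p2: "pre Ob Sp z a \<alpha>' \<alpha>"
  shows "pre Ob Sp z a \<beta> \<alpha>"
proof -
  let ?n = "length z" and ?m = "length a"
  from cf have da: "distinct a" and pO: "params_ok ?n ?m Ob" and pS: "params_ok ?n ?m Sp"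
    and tr: "app Sp (fresh IX ?n) (fresh IY ?n) (fresh IA ?m) \<union> app Ob (fresh IX ?n) (fresh IY ?n) (fresh IA ?m)
       \<union> app Sp (fresh IY ?n) (fresh IZ ?n) (fresh IB ?m) \<union> app Ob (fresh IY ?n) (fresh IZ ?n) (fresh IB ?m)
       \<union> app Sp (fresh IX ?n) (fresh IZ ?n) (fresh IC ?m) \<turnstile>\<^sub>c\<^sub>p app Ob (fresh IX ?n) (fresh IZ ?n) (fresh IC ?m)"
    and spec: "is_specification ?m Sp"
    unfolding configuration_def Let_def by auto
  obtain \<rho>1 where r1: "sat_pbf (asg z a \<beta> \<alpha>' \<rho>1) Sp" "sat_pbf (asg z a \<beta> \<alpha>' \<rho>1) Ob"
    using p1 pre_iff[OF pO pS] by blast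
  obtain \<rho>2 where r2: "sat_pbf (asg z a \<alpha>' \<alpha> \<rho>2) Sp" "sat_pbf (asg z a \<alpha>' \<alpha> \<rho>2) Ob"
    using p2 pre_iff[OF pO pS] by blast
  obtain \<nu>' where n1: "sat_pbf \<nu>' Sp" and n2: "\<forall>v. v \<notin> {FA j | j. j < ?m} \<longrightarrow> \<nu>' v = asg z a \<beta> \<alpha> (\<lambda>_. False) v"
    using spec_ext[OF spec] by blast
  define \<delta> where "\<delta> = (\<lambda>v. case v of IX i \<Rightarrow> \<beta> (z!i) | IY i \<Rightarrow> \<alpha>' (z!i) | IZ i \<Rightarrow> \<alpha> (z!i)
     | IA j \<Rightarrow> \<rho>1 (a!j) | IB j \<Rightarrow> \<rho>2 (a!j) | IC j \<Rightarrow> \<nu>' (FA j))"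
  have s1: "sat_pbf \<delta> (app Sp (fresh IX ?n) (fresh IY ?n) (fresh IA ?m))"
    unfolding app_sat by (rule params_agree'[OF pS r1(1)]) (auto simp: \<delta>_def)
  have s2: "sat_pbf \<delta> (app Ob (fresh IX ?n) (fresh IY ?n) (fresh IA ?m))"
    unfolding app_sat by (rule params_agree'[OF pO r1(2)]) (auto simp: \<delta>_def)
  have s3: "sat_pbf \<delta> (app Sp (fresh IY ?n) (fresh IZ ?n) (fresh IB ?m))"
    unfolding app_sat by (rule params_agree'[OF pS r2(1)]) (auto simp: \<delta>_def)
  have s4: "sat_pbf \<delta> (app Ob (fresh IY ?n) (fresh IZ ?n) (fresh IB ?m))"
    unfolding app_sat by (rule params_agree'[OF pO r2(2)]) (auto simp: \<delta>_def)
  have nFU: "\<nu>' (FU i) = \<beta> (z!i)" for i using n2[rule_format, of "FU i"] by simp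
  have nFV: "\<nu>' (FV i) = \<alpha> (z!i)" for i using n2[rule_format, of "FV i"] by simp
  have s5: "sat_pbf \<delta> (app Sp (fresh IX ?n) (fresh IZ ?n) (fresh IC ?m))"
    unfolding app_sat by (rule params_agree'[OF pS n1]) (auto simp: \<delta>_def nFU nFV)
  have "sat_pbf \<delta> (app Ob (fresh IX ?n) (fresh IZ ?n) (fresh IC ?m))"
  proof -
    have "sat_pbf \<delta> (app Sp (fresh IX ?n) (fresh IY ?n) (fresh IA ?m) \<union> app Ob (fresh IX ?n) (fresh IY ?n) (fresh IA ?m)
       \<union> app Sp (fresh IY ?n) (fresh IZ ?n) (fresh IB ?m) \<union> app Ob (fresh IY ?n) (fresh IZ ?n) (fresh IB ?m)
       \<union> app Sp (fresh IX ?n) (fresh IZ ?n) (fresh IC ?m))"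
      using s1 s2 s3 s4 s5 by (simp only: sat_pbf_Un)
    then show ?thesis using derives_sound[OF tr] by blast
  qed
  then have o: "sat_pbf (sv \<delta> \<circ> inst (fresh IX ?n) (fresh IZ ?n) (fresh IC ?m)) Ob" by (simp add: app_sat)
  define \<rho>3 where "\<rho>3 = (\<lambda>x. \<nu>' (FA (SOME k. k < ?m \<and> a!k = x)))"
  have r3: "\<rho>3 (a!j) = \<nu>' (FA j)" if "j < ?m" for j
    using some_idx[OF da that] by (simp add: \<rho>3_def)
  have "sat_pbf (asg z a \<beta> \<alpha> \<rho>3) Ob"
    by (rule params_agree'[OF pO o]) (auto simp: \<delta>_def r3)
  moreover have "sat_pbf (asg z a \<beta> \<alpha> \<rho>3) Sp"
    by (rule params_agree'[OF pS n1]) (auto simp: r3 nFU nFV)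
  ultimately show ?thesis using pre_iff[OF pO pS] by blast
qed

theorem lemma5:
  fixes F C D :: "'v pbf" and Ob Sp :: "fvar pbf" and z a :: "'v list"
    and Cn :: "'v pbc" and \<omega> :: "'v \<Rightarrow> 'v sval"
  assumes "configuration C D Ob Sp z a"
    and "weakly_valid F C D Ob Sp z a"
    and "vars_pbc Cn \<inter> set a = {}"
    and "\<forall>x. \<forall>y\<in>set a. \<omega> x \<noteq> LitV (Pos y) \<and> \<omega> x \<noteq> LitV (Neg y)"
    and "C \<union> D \<union> {neg_pbc Cn} \<union> app Sp (list_subst z \<omega>) (list_vars z) (list_vars a)
           \<turnstile>\<^sub>c\<^sub>p subst_pbf \<omega> (C \<union> D \<union> {Cn}) \<union> app Ob (list_subst z \<omega>) (list_vars z) (list_vars a)"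
  shows "weakly_valid F C (D \<union> {Cn}) Ob Sp z a"
proof -
  let ?n = "length z" and ?m = "length a"
  from assms(1) have dz: "set z \<inter> set a = {}" and da: "distinct a"
    and pO: "params_ok ?n ?m Ob" and pS: "params_ok ?n ?m Sp"
    and spec: "is_specification ?m Sp" and vC: "vars_pbf C \<inter> set a = {}" and vD: "vars_pbf D \<inter> set a = {}"
    unfolding configuration_def Let_def by auto
  show ?thesis unfolding weakly_valid_def
  proof (intro conjI allI impI)
    assume "satisfiable F" then show "satisfiable C" using assms(2) weakly_valid_def by blast
  next
    fix \<alpha> assume "sat_pbf \<alpha> C"
    then obtain \<alpha>' where a1: "sat_pbf \<alpha>' (C \<union> D)" and a2: "pre Ob Sp z a \<alpha>' \<alpha>"
      using assms(2) unfolding weakly_valid_def by blast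
    show "\<exists>\<alpha>'. sat_pbf \<alpha>' (C \<union> (D \<union> {Cn})) \<and> pre Ob Sp z a \<alpha>' \<alpha>"
    proof (cases "sat_pbc \<alpha>' Cn")
      case True then show ?thesis using a1 a2 by (auto simp: sat_pbf_def)
    next
      case False
      obtain \<nu>' where n1: "sat_pbf \<nu>' Sp"
        and n2: "\<forall>v. v \<notin> {FA j | j. j < ?m} \<longrightarrow> \<nu>' v = asg z a (sv \<alpha>' \<circ> \<omega>) \<alpha>' (\<lambda>_. False) v"
        using spec_ext[OF spec] by blast
      have nFU: "\<nu>' (FU i) = sv \<alpha>' (\<omega> (z!i))" for i using n2[rule_format, of "FU i"] by simp
      have nFV: "\<nu>' (FV i) = \<alpha>' (z!i)" for i using n2[rule_format, of "FV i"] by simp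
      define \<rho> where "\<rho> = (\<lambda>x. \<nu>' (FA (SOME k. k < ?m \<and> a!k = x)))"
      define \<gamma> where "\<gamma> = (\<lambda>x. if x \<in> set a then \<rho> x else \<alpha>' x)"
      have \<gamma>z: "\<gamma> (z!i) = \<alpha>' (z!i)" if "i < ?n" for i
      proof -
        have "z!i \<notin> set a" using dz nth_mem[OF that] by blast
        then show ?thesis by (simp add: \<gamma>_def)
      qed
      have \<gamma>a: "\<gamma> (a!j) = \<nu>' (FA j)" if "j < ?m" for j
        using some_idx[OF da that] that by (simp add: \<gamma>_def \<rho>_def)
      have \<gamma>\<omega>: "sv \<gamma> (\<omega> x) = sv \<alpha>' (\<omega> x)" for x
      proof (cases "\<omega> x")
        case (Val b) then show ?thesis by simp
      next
        case (LitV l)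
        then have "lit_var l \<notin> set a" using assms(4) by (cases l) auto
        then show ?thesis using LitV by (cases l) (auto simp: \<gamma>_def)
      qed
      have \<gamma>CD: "sat_pbf \<gamma> (C \<union> D)"
      proof -
        have "\<forall>v\<in>vars_pbf (C \<union> D). \<gamma> v = \<alpha>' v" using vC vD
          by (auto simp: \<gamma>_def vars_pbf_def)
        then show ?thesis using a1 sat_pbf_agree by blast
      qed
      have "sat_pbc \<gamma> Cn = sat_pbc \<alpha>' Cn"
        by (rule sat_pbc_agree) (use assms(3) in \<open>auto simp: \<gamma>_def\<close>)
      then have \<gamma>n: "sat_pbc \<gamma> (neg_pbc Cn)" using False neg_sat by blast
      have \<gamma>S: "sat_pbf \<gamma> (app Sp (list_subst z \<omega>) (list_vars z) (list_vars a))"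
        unfolding app_sat
        by (rule params_agree'[OF pS n1]) (auto simp: list_subst_def list_vars_def \<gamma>\<omega> \<gamma>z \<gamma>a nFU nFV)
      have "sat_pbf \<gamma> (C \<union> D \<union> {neg_pbc Cn} \<union> app Sp (list_subst z \<omega>) (list_vars z) (list_vars a))"
        using \<gamma>CD \<gamma>n \<gamma>S by (auto simp: sat_pbf_def)
      then have "sat_pbf \<gamma> (subst_pbf \<omega> (C \<union> D \<union> {Cn}) \<union> app Ob (list_subst z \<omega>) (list_vars z) (list_vars a))"
        using derives_sound[OF assms(5)] by blast
      then have s0: "sat_pbf \<gamma> (subst_pbf \<omega> (C \<union> D \<union> {Cn}))"
        and s2: "sat_pbf \<gamma> (app Ob (list_subst z \<omega>) (list_vars z) (list_vars a))"
        by simp_all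
      from s0 have s1: "sat_pbf (sv \<gamma> \<circ> \<omega>) (C \<union> D \<union> {Cn})" by (simp only: sat_subst_pbf)
      have eq: "sv \<gamma> \<circ> \<omega> = sv \<alpha>' \<circ> \<omega>" using \<gamma>\<omega> by auto
      have "sat_pbf (asg z a (sv \<alpha>' \<circ> \<omega>) \<alpha>' \<gamma>) Ob"
        by (rule params_agree'[OF pO s2[unfolded app_sat]]) (auto simp: list_subst_def list_vars_def \<gamma>\<omega> \<gamma>z)
      moreover have "sat_pbf (asg z a (sv \<alpha>' \<circ> \<omega>) \<alpha>' \<gamma>) Sp"
        by (rule params_agree'[OF pS n1]) (auto simp: \<gamma>a nFU nFV)
      ultimately have "pre Ob Sp z a (sv \<alpha>' \<circ> \<omega>) \<alpha>'" using pre_iff[OF pO pS] by blast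
      then have "pre Ob Sp z a (sv \<alpha>' \<circ> \<omega>) \<alpha>" using pre_trans[OF assms(1) _ a2] by blast
      moreover have "sat_pbf (sv \<alpha>' \<circ> \<omega>) (C \<union> (D \<union> {Cn}))" using s1 eq by (simp add: Un_assoc)
      ultimately show ?thesis by blast
    qed
  qed
qed

end
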